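(* Let $K, L, \Gamma, \Delta, P, \Lambda$ be positive integers with $\Gamma \le L$, $\Delta \le K$, $\Lambda \le P$, $\Delta \mid K$ and $\Lambda \mid P$. Let $\bar{\mathcal{F}} \in \mathbb{R}^{K \times P \times \cdots \times P}$ (with $L$ modes of size $P$ after the first) be any demand tensor, $\bar{\mathcal{F}}(k,\underline{\mathbf{p}}) = c_{k,\underline{\mathbf{p}}}$, whose entries vanish at every index $(k,\underline{\mathbf{p}})$ for which more than $\Gamma$ coordinates of $\underline{\mathbf{p}}=(p_1,\dots,p_L)\in[P]^L$ are active (differ from $1$). Then there exist an integer $$N \le \frac{K}{\Delta}\binom{L}{\Gamma}\min\big(\Delta,\Lambda^{\Gamma}\big)\Big(\frac{P}{\Lambda}\Big)^{\Gamma},$$ a decoding matrix $\mathbf{D}\in\mathbb{R}^{K\times N}$ and an encoding tensor $\bar{\mathcal{E}}\in\mathbb{R}^{N\times P\times\cdots\times P}$ such that $\bar{\mathcal{F}} = \bar{\mathcal{E}}\times_1 \mathbf{D}$ (lossless recovery of all $K$ demands) and, for every $n\in[N]$: (i) the column $\mathbf{D}(:,n)$ has at most $\Delta$ nonzero entries; (ii) there is a set $\mathcal{S}_n\subseteq[L]$ with $|\mathcal{S}_n|\le\Gamma$ such that $\bar{\mathcal{E}}(n,\underline{\mathbf{p}})\neq 0$ only if all coordinates $p_\ell$ with $\ell\notin\mathcal{S}_n$ are inactive (equal to $1$); (iii) for each $\ell\in\mathcal{S}_n$, writing $\mathcal{P}_n=\{\underline{\mathbf{p}}:\bar{\mathcal{E}}(n,\underline{\mathbf{p}})\neq0\}$,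 one has $\max_{\underline{\mathbf{p}}\in\mathcal{P}_n}p_\ell-\min_{\underline{\mathbf{p}}\in\mathcal{P}_n}p_\ell+1\le\Lambda$. Consequently the system rate $R=K/N$ is achievable.
   Context: Distributed computing setting: $K$ users, $N$ servers, $L$ real basis subfunctions with outputs $W_1,\dots,W_L$. User $k$ requests $F_k=\sum_{\underline{\mathbf{p}}\in[P]^L} c_{k,\underline{\mathbf{p}}}\prod_{\ell\in[L]}W_\ell^{p_\ell}$; the coefficients form the order-$(L+1)$ tensor $\bar{\mathcal{F}}$. Server $n$ computes the subfunctions in $\mathcal{S}_n$ and the monomials indexed by $\mathcal{P}_n$, transmits $z_n=\sum_{\underline{\mathbf{p}}\in\mathcal{P}_n}e_{n,\underline{\mathbf{p}}}\prod_\ell W_\ell^{p_\ell}$ (with $\bar{\mathcal{E}}(n,\underline{\mathbf{p}})=e_{n,\underline{\mathbf{p}}}$) to at most $\Delta$ users, and user $k$ forms $F'_k=\sum_n d_{k,n}z_n$ with $\mathbf{D}=(d_{k,n})$; error-free recovery for all demands is equivalent to $\bar{\mathcal{F}}=\bar{\mathcal{E}}\times_1\mathbf{D}$. Constraints: computation cost $\Gamma$ (number of subfunctions per server), communication cost $\Delta$ (users per server), multiplication cost $\Lambda$ (range of exponents of each computed subfunction per server). The mode-1 product $\bar{\mathcal{E}}\times_1\mathbf{D}$ is defined by unfolding $\bar{\mathcal{E}}$ along mode 1 into $\bar{\mathcal{E}}_{(1)}\in\mathbb{R}^{N\times P^L}$, computing $\mathbf{D}\bar{\mathcal{E}}_{(1)}$,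 and folding back to a $K\times P\times\cdots\times P$ tensor; equivalently $(\bar{\mathcal{E}}\times_1\mathbf{D})(k,\underline{\mathbf{p}})=\sum_n d_{k,n}\bar{\mathcal{E}}(n,\underline{\mathbf{p}})$. The system rate is $R=K/N$. *)

theory Defs
  imports Complex_Main
begin

text \<open>Exponent tuples \<open>p = (p_1,...,p_L) \<in> [P]^L\<close> are lists of length L with entries in {1..P};
  coordinate \<open>\<ell>\<close> (0-based position in the list) is inactive iff it equals 1.\<close>

definition exp_tuples :: "nat \<Rightarrow> nat \<Rightarrow> nat list set" where
  "exp_tuples L P = {p. length p = L \<and> set p \<subseteq> {1..P}}"

definition active_coords :: "nat list \<Rightarrow> nat set" where
  "active_coords p = {l. l < length p \<and> p ! l \<noteq> 1}"

definition mode1_product :: "nat \<Rightarrow> (nat \<Rightarrow> nat list \<Rightarrow> real) \<Rightarrow> (nat \<Rightarrow> nat \<Rightarrow> real)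
    \<Rightarrow> nat \<Rightarrow> nat list \<Rightarrow> real" where
  "mode1_product N E D k p = (\<Sum>n<N. D k n * E n p)"

definition support_row :: "nat \<Rightarrow> nat \<Rightarrow> (nat \<Rightarrow> nat list \<Rightarrow> real) \<Rightarrow> nat \<Rightarrow> nat list set" where
  "support_row L P E n = {p \<in> exp_tuples L P. E n p \<noteq> 0}"

end

theory Submission
  imports Defs "HOL-Library.FuncSet"
begin

definition good :: "nat \<Rightarrow> nat \<Rightarrow> nat \<Rightarrow> nat \<Rightarrow> nat \<Rightarrow> nat \<Rightarrow> (nat \<Rightarrow> real) \<Rightarrow> (nat list \<Rightarrow> real) \<Rightarrow> bool" where
  "good K L P G Dl Lm dc er \<longleftrightarrow> card {k. k < K \<and> dc k \<noteq> 0} \<le> Dl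
      \<and> (\<exists>S \<subseteq> {..<L}. card S \<le> G
           \<and> (\<forall>p\<in>exp_tuples L P. er p \<noteq> 0 \<longrightarrow> (\<forall>l<L. l \<notin> S \<longrightarrow> p ! l = 1))
           \<and> (\<forall>l\<in>S. support_row L P (\<lambda>_. er) 0 \<noteq> {} \<longrightarrow>
                 Max ((\<lambda>p. p ! l) ` support_row L P (\<lambda>_. er) 0)
                 - Min ((\<lambda>p. p ! l) ` support_row L P (\<lambda>_. er) 0) + 1 \<le> Lm))"

lemma reduce:
  fixes M :: "'x set" and Dx :: "'x \<Rightarrow> nat \<Rightarrow> real" and Ex :: "'x \<Rightarrow> nat list \<Rightarrow> real"
  assumes fin: "finite M" and cardM: "real (card M) \<le> B"
    and rec: "\<forall>k<K. \<forall>p\<in>exp_tuples L P. F k p = (\<Sum>x\<in>M. Dx x k * Ex x p)"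
    and gd: "\<forall>x\<in>M. good K L P G Dl Lm (Dx x) (Ex x)"
  shows "\<exists>(N::nat) (D :: nat \<Rightarrow> nat \<Rightarrow> real) (E :: nat \<Rightarrow> nat list \<Rightarrow> real).
     real N \<le> B
   \<and> (\<forall>k<K. \<forall>p\<in>exp_tuples L P. F k p = mode1_product N E D k p)
   \<and> (\<forall>n<N.
        card {k. k < K \<and> D k n \<noteq> 0} \<le> Dl
      \<and> (\<exists>S \<subseteq> {..<L}. card S \<le> G
           \<and> (\<forall>p\<in>exp_tuples L P. E n p \<noteq> 0 \<longrightarrow> (\<forall>l<L. l \<notin> S \<longrightarrow> p ! l = 1))
           \<and> (\<forall>l\<in>S. support_row L P E n \<noteq> {} \<longrightarrow>
                 Max ((\<lambda>p. p ! l) ` support_row L P E n)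
                 - Min ((\<lambda>p. p ! l) ` support_row L P E n) + 1 \<le> Lm)))"
proof -
  obtain h where h: "bij_betw h {0..<card M} M" using ex_bij_betw_nat_finite fin by blast
  define D where "D = (\<lambda>k n. Dx (h n) k)"
  define E where "E = (\<lambda>n. Ex (h n))"
  have 1: "F k p = mode1_product (card M) E D k p" if "k < K" "p \<in> exp_tuples L P" for k p
  proof -
    have "mode1_product (card M) E D k p = (\<Sum>n\<in>{0..<card M}. Dx (h n) k * Ex (h n) p)"
      unfolding mode1_product_def D_def E_def by (simp add: atLeast0LessThan)
    also have "\<dots> = (\<Sum>x\<in>M. Dx x k * Ex x p)"
      using sum.reindex_bij_betw[OF h, of "\<lambda>x. Dx x k * Ex x p"] by simp
    finally show ?thesis using rec that by simp
  qed
  have 2: "card {k. k < K \<and> D k n \<noteq> 0} \<le> Dl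
      \<and> (\<exists>S \<subseteq> {..<L}. card S \<le> G
           \<and> (\<forall>p\<in>exp_tuples L P. E n p \<noteq> 0 \<longrightarrow> (\<forall>l<L. l \<notin> S \<longrightarrow> p ! l = 1))
           \<and> (\<forall>l\<in>S. support_row L P E n \<noteq> {} \<longrightarrow>
                 Max ((\<lambda>p. p ! l) ` support_row L P E n)
                 - Min ((\<lambda>p. p ! l) ` support_row L P E n) + 1 \<le> Lm))" if "n < card M" for n
  proof -
    have "h n \<in> M" using h that bij_betwE by fastforce
    then have g: "good K L P G Dl Lm (Dx (h n)) (Ex (h n))" using gd by blast
    have sr: "support_row L P E n = support_row L P (\<lambda>_. Ex (h n)) 0"
      unfolding support_row_def E_def by simp
    show ?thesis using g unfolding sr unfolding good_def D_def E_def by simp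
  qed
  show ?thesis using 1 2 cardM by blast
qed


definition canon :: "nat \<Rightarrow> nat \<Rightarrow> nat set \<Rightarrow> nat set" where
  "canon L G A = (SOME S. A \<subseteq> S \<and> S \<subseteq> {..<L} \<and> card S = G)"

lemma canon_ex:
  assumes "A \<subseteq> {..<L}" "card A \<le> G" "G \<le> L"
  shows "\<exists>S. A \<subseteq> S \<and> S \<subseteq> {..<L} \<and> card S = G"
proof -
  have fA: "finite A" using assms(1) finite_subset by blast
  have "card ({..<L} - A) = L - card A" using assms(1) fA by (simp add: card_Diff_subset)
  then have "G - card A \<le> card ({..<L} - A)" using assms by simp
  then obtain T where T: "T \<subseteq> {..<L} - A" "card T = G - card A" "finite T"
    by (rule obtain_subset_with_card_n)
  have "card (A \<union> T) = card A + card T" using T fA by (subst card_Un_disjoint) auto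
  then have "card (A \<union> T) = G" using T assms by simp
  then show ?thesis using T assms by (intro exI[of _ "A \<union> T"]) auto
qed

lemma canon:
  assumes "A \<subseteq> {..<L}" "card A \<le> G" "G \<le> L"
  shows "A \<subseteq> canon L G A" "canon L G A \<subseteq> {..<L}" "card (canon L G A) = G"
  using someI_ex[OF canon_ex[OF assms]] unfolding canon_def by auto

lemma active_sub: "p \<in> exp_tuples L P \<Longrightarrow> active_coords p \<subseteq> {..<L}"
  unfolding active_coords_def exp_tuples_def by auto

lemma exp_tuples_finite: "finite (exp_tuples L P)"
proof -
  have "exp_tuples L P = {xs. set xs \<subseteq> {1..P} \<and> length xs = L}" unfolding exp_tuples_def by auto
  then show ?thesis using finite_lists_length_eq[of "{1..P}" L] by simp
qed

lemma exp_nth: "p \<in> exp_tuples L P \<Longrightarrow> l < L \<Longrightarrow> p ! l \<in> {1..P}"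
  unfolding exp_tuples_def using nth_mem by fastforce

lemma inactive: "p \<in> exp_tuples L P \<Longrightarrow> active_coords p \<subseteq> S \<Longrightarrow> l < L \<Longrightarrow> l \<notin> S \<Longrightarrow> p ! l = 1"
  unfolding exp_tuples_def active_coords_def by auto

lemma range_lemma:
  fixes A :: "nat set"
  assumes "finite A" "A \<noteq> {}" "\<forall>a\<in>A. c + 1 \<le> a \<and> a \<le> c + Lm"
  shows "Max A - Min A + 1 \<le> Lm"
proof -
  have "Max A \<in> A" "Min A \<in> A" using assms by auto
  then have "c + 1 \<le> Min A" "Max A \<le> c + Lm" using assms(3) by auto
  moreover have "Min A \<le> Max A" using Max_ge[OF assms(1) \<open>Min A \<in> A\<close>] .
  ultimately show ?thesis by linarith
qed


lemma card_subs: "card {S. S \<subseteq> {..<L} \<and> card S = G} = L choose G"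
  using n_subsets[of "{..<L}" G] by simp

lemma sum_single:
  assumes "finite M" "x0 \<in> M" "\<forall>x\<in>M. f x = (if x = x0 then c else 0)"
  shows "sum f M = (c::real)"
proof -
  have "sum f M = (\<Sum>x\<in>M. if x = x0 then c else 0)" using assms(3) by (intro sum.cong) auto
  also have "\<dots> = c" using assms(1,2) by (simp add: sum.delta)
  finally show ?thesis .
qed

lemma user_case:
  fixes F :: "nat \<Rightarrow> nat list \<Rightarrow> real"
  assumes "0 < Dl" "0 < Lm" "G \<le> L" "Dl dvd K" "Lm dvd P"
    and F_sparse: "\<forall>k<K. \<forall>p\<in>exp_tuples L P. card (active_coords p) > G \<longrightarrow> F k p = 0"
  shows "\<exists>(M :: (nat \<times> (nat set \<times> (nat \<Rightarrow> nat)) \<times> nat) set) Dx Ex. finite M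
     \<and> card M = (K div Dl) * ((L choose G) * (P div Lm) ^ G) * Dl
     \<and> (\<forall>k<K. \<forall>p\<in>exp_tuples L P. F k p = (\<Sum>x\<in>M. Dx x k * Ex x p))
     \<and> (\<forall>x\<in>M. good K L P G Dl Lm (Dx x) (Ex x))"
proof -
  define Subs where "Subs = {S. S \<subseteq> {..<L} \<and> card S = G}"
  define Blk where "Blk = (SIGMA S:Subs. PiE S (\<lambda>_. {0..<P div Lm}))"
  define M where "M = {0..<K div Dl} \<times> Blk \<times> {0..<Dl}"
  define Dx :: "nat \<times> (nat set \<times> (nat \<Rightarrow> nat)) \<times> nat \<Rightarrow> nat \<Rightarrow> real"
    where "Dx = (\<lambda>(g,(S,b),j) k. if k = g * Dl + j then 1 else 0)"
  define Ex :: "nat \<times> (nat set \<times> (nat \<Rightarrow> nat)) \<times> nat \<Rightarrow> nat list \<Rightarrow> real"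
    where "Ex = (\<lambda>(g,(S,b),j) p. if card (active_coords p) \<le> G \<and> canon L G (active_coords p) = S
        \<and> (\<forall>l\<in>S. b l = (p ! l - 1) div Lm) then F (g * Dl + j) p else 0)"
  have finSubs: "finite Subs" unfolding Subs_def by (rule finite_subset[of _ "Pow {..<L}"]) auto
  have finBlk: "finite Blk" unfolding Blk_def using finSubs
    by (intro finite_SigmaI finite_PiE) (auto simp: Subs_def intro: finite_subset)
  have finM: "finite M" unfolding M_def using finBlk by simp
  have cBlk: "card Blk = (L choose G) * (P div Lm) ^ G"
  proof -
    have "card Blk = (\<Sum>S\<in>Subs. card (PiE S (\<lambda>_. {0..<P div Lm})))"
      unfolding Blk_def using finSubs
      by (intro card_SigmaI) (auto simp: Subs_def intro!: finite_PiE intro: finite_subset)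
    also have "\<dots> = (\<Sum>S\<in>Subs. (P div Lm) ^ G)"
      by (intro sum.cong refl) (auto simp: Subs_def card_PiE dest: finite_subset[OF _ finite_lessThan])
    also have "\<dots> = (L choose G) * (P div Lm) ^ G" using card_subs[of L G] by (simp add: Subs_def)
    finally show ?thesis .
  qed
  have cM: "card M = (K div Dl) * ((L choose G) * (P div Lm) ^ G) * Dl"
    unfolding M_def using cBlk by (simp add: card_cartesian_product)
  have rec: "F k p = (\<Sum>x\<in>M. Dx x k * Ex x p)" if k: "k < K" and p: "p \<in> exp_tuples L P" for k p
  proof (cases "card (active_coords p) \<le> G")
    case False
    then have "F k p = 0" using F_sparse k p by auto
    moreover have "\<forall>x\<in>M. Ex x p = 0" using False unfolding Ex_def by auto
    ultimately show ?thesis by simp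
  next
    case True
    define A where "A = active_coords p"
    have AL: "A \<subseteq> {..<L}" using active_sub[OF p] A_def by simp
    define S0 where "S0 = canon L G A"
    note c = canon[OF AL True[folded A_def] assms(3), folded S0_def]
    define b0 where "b0 = restrict (\<lambda>l. (p ! l - 1) div Lm) S0"
    define x0 where "x0 = (k div Dl, (S0, b0), k mod Dl)"
    have "b0 \<in> PiE S0 (\<lambda>_. {0..<P div Lm})"
    proof -
      have "(p ! l - 1) div Lm < P div Lm" if "l \<in> S0" for l
      proof -
        have "p ! l \<in> {1..P}" using exp_nth[OF p] c(2) that by auto
        then have "p ! l - 1 < Lm * (P div Lm)" using assms(2) \<open>Lm dvd P\<close> by (simp, linarith)
        then show ?thesis by (simp add: less_mult_imp_div_less mult.commute)
      qed
      then show ?thesis unfolding b0_def by auto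
    qed
    then have x0M: "x0 \<in> M" unfolding x0_def M_def Blk_def Subs_def using c k assms(1,4)
      by (auto simp: less_mult_imp_div_less)
    have "\<forall>x\<in>M. Dx x k * Ex x p = (if x = x0 then F k p else 0)"
    proof
      fix x assume xM: "x \<in> M"
      obtain g S b j where x: "x = (g,(S,b),j)" by (cases x) auto
      show "Dx x k * Ex x p = (if x = x0 then F k p else 0)"
      proof (cases "k = g * Dl + j \<and> canon L G (active_coords p) = S \<and> (\<forall>l\<in>S. b l = (p ! l - 1) div Lm)")
        case True2: True
        have j: "j < Dl" and bS: "b \<in> PiE S (\<lambda>_. {0..<P div Lm})" using xM x unfolding M_def Blk_def by auto
        have "g = k div Dl" "j = k mod Dl" using True2 j assms(1) by auto
        moreover have "S = S0" using True2 S0_def A_def by simp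
        moreover have "b = b0" using bS True2 \<open>S = S0\<close> unfolding b0_def
          by (intro ext) (auto simp: PiE_def extensional_def)
        ultimately have "x = x0" using x x0_def by simp
        moreover have "Dx x k * Ex x p = F k p" using True True2 unfolding x Dx_def Ex_def by simp
        ultimately show ?thesis by simp
      next
        case False
        then have "Dx x k * Ex x p = 0" using x unfolding Dx_def Ex_def by auto
        moreover have "x \<noteq> x0"
        proof
          assume "x = x0"
          then have "g = k div Dl" "j = k mod Dl" "S = S0" "b = b0" using x x0_def by auto
          then show False using False S0_def A_def b0_def by simp
        qed
        ultimately show ?thesis by simp
      qed
    qed
    then show ?thesis using sum_single[OF finM x0M] by simp
  qed
  have gd: "good K L P G Dl Lm (Dx x) (Ex x)" if xM: "x \<in> M" for x
  proof -
    obtain g S b j where x: "x = (g,(S,b),j)" by (cases x) auto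
    have SL: "S \<subseteq> {..<L}" "card S = G" using xM x unfolding M_def Blk_def Subs_def by auto
    have "{k. k < K \<and> Dx x k \<noteq> 0} \<subseteq> {g * Dl + j}" using x unfolding Dx_def by auto
    then have "card {k. k < K \<and> Dx x k \<noteq> 0} \<le> card {g * Dl + j}"
      by (intro card_mono) simp_all
    then have c1: "card {k. k < K \<and> Dx x k \<noteq> 0} \<le> Dl" using assms(1) by simp
    have c2: "\<forall>p\<in>exp_tuples L P. Ex x p \<noteq> 0 \<longrightarrow> (\<forall>l<L. l \<notin> S \<longrightarrow> p ! l = 1)"
    proof (intro ballI impI allI)
      fix p l assume p: "p \<in> exp_tuples L P" and ne: "Ex x p \<noteq> 0" and l: "l < L" "l \<notin> S"
      then have "card (active_coords p) \<le> G" "canon L G (active_coords p) = S"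
        using x unfolding Ex_def by (auto split: if_splits)
      then have "active_coords p \<subseteq> S" using canon(1)[OF active_sub[OF p]] assms(3) by auto
      then show "p ! l = 1" using inactive[OF p _ l] by simp
    qed
    have c3: "Max ((\<lambda>p. p ! l) ` support_row L P (\<lambda>_. Ex x) 0)
                 - Min ((\<lambda>p. p ! l) ` support_row L P (\<lambda>_. Ex x) 0) + 1 \<le> Lm"
      if l: "l \<in> S" and ne: "support_row L P (\<lambda>_. Ex x) 0 \<noteq> {}" for l
    proof (rule range_lemma[where c = "b l * Lm"])
      show "finite ((\<lambda>p. p ! l) ` support_row L P (\<lambda>_. Ex x) 0)"
        unfolding support_row_def using exp_tuples_finite by simp
      show "(\<lambda>p. p ! l) ` support_row L P (\<lambda>_. Ex x) 0 \<noteq> {}" using ne by simp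
      show "\<forall>a\<in>(\<lambda>p. p ! l) ` support_row L P (\<lambda>_. Ex x) 0. b l * Lm + 1 \<le> a \<and> a \<le> b l * Lm + Lm"
      proof
        fix a assume "a \<in> (\<lambda>p. p ! l) ` support_row L P (\<lambda>_. Ex x) 0"
        then obtain p where p: "p \<in> exp_tuples L P" "Ex x p \<noteq> 0" and a: "a = p ! l"
          unfolding support_row_def by auto
        have bl: "b l = (p ! l - 1) div Lm" using p(2) x l unfolding Ex_def by (auto split: if_splits)
        have "p ! l \<in> {1..P}" using exp_nth[OF p(1)] SL l by auto
        then show "b l * Lm + 1 \<le> a \<and> a \<le> b l * Lm + Lm"
        proof -
          have e: "(p ! l - 1) div Lm * Lm + (p ! l - 1) mod Lm = p ! l - 1" by (rule div_mult_mod_eq)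
          have "(p ! l - 1) mod Lm < Lm" using assms(2) by simp
          moreover have "p ! l = (p ! l - 1) + 1" using \<open>p ! l \<in> {1..P}\<close> by simp
          ultimately show ?thesis unfolding a bl using e by linarith
        qed
      qed
    qed
    show ?thesis unfolding good_def using c1 c2 c3 SL by blast
  qed
  show ?thesis using finM cM rec gd by blast
qed


definition mono_tuple :: "nat \<Rightarrow> nat set \<Rightarrow> (nat \<Rightarrow> nat) \<Rightarrow> nat list" where
  "mono_tuple L S q = map (\<lambda>l. if l \<in> S then q l else 1) [0..<L]"

lemma div_block: "k div (Dl::nat) = g \<Longrightarrow> 0 < Dl \<Longrightarrow> k \<in> {g * Dl..<g * Dl + Dl}"
  by (metis atLeastLessThan_iff div_times_less_eq_dividend mult.commute
      less_mult_imp_div_less dividend_less_div_times add.commute)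

lemma mono_case:
  fixes F :: "nat \<Rightarrow> nat list \<Rightarrow> real"
  assumes "0 < Dl" "0 < Lm" "G \<le> L" "Dl dvd K"
    and F_sparse: "\<forall>k<K. \<forall>p\<in>exp_tuples L P. card (active_coords p) > G \<longrightarrow> F k p = 0"
  shows "\<exists>(M :: (nat \<times> (nat set \<times> (nat \<Rightarrow> nat))) set) Dx Ex. finite M
     \<and> card M = (K div Dl) * ((L choose G) * P ^ G)
     \<and> (\<forall>k<K. \<forall>p\<in>exp_tuples L P. F k p = (\<Sum>x\<in>M. Dx x k * Ex x p))
     \<and> (\<forall>x\<in>M. good K L P G Dl Lm (Dx x) (Ex x))"
proof -
  define Subs where "Subs = {S. S \<subseteq> {..<L} \<and> card S = G}"
  define Blk where "Blk = (SIGMA S:Subs. PiE S (\<lambda>_. {1..P}))"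
  define M where "M = {0..<K div Dl} \<times> Blk"
  define Dx :: "nat \<times> (nat set \<times> (nat \<Rightarrow> nat)) \<Rightarrow> nat \<Rightarrow> real"
    where "Dx = (\<lambda>(g,(S,q)) k. if k div Dl = g then F k (mono_tuple L S q) else 0)"
  define Ex :: "nat \<times> (nat set \<times> (nat \<Rightarrow> nat)) \<Rightarrow> nat list \<Rightarrow> real"
    where "Ex = (\<lambda>(g,(S,q)) p. if p = mono_tuple L S q \<and> card (active_coords p) \<le> G
        \<and> canon L G (active_coords p) = S then 1 else 0)"
  have finSubs: "finite Subs" unfolding Subs_def by (rule finite_subset[of _ "Pow {..<L}"]) auto
  have finBlk: "finite Blk" unfolding Blk_def using finSubs
    by (intro finite_SigmaI finite_PiE) (auto simp: Subs_def intro: finite_subset)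
  have finM: "finite M" unfolding M_def using finBlk by simp
  have cBlk: "card Blk = (L choose G) * P ^ G"
  proof -
    have "card Blk = (\<Sum>S\<in>Subs. card (PiE S (\<lambda>_. {1..P})))"
      unfolding Blk_def using finSubs
      by (intro card_SigmaI) (auto simp: Subs_def intro!: finite_PiE intro: finite_subset)
    also have "\<dots> = (\<Sum>S\<in>Subs. P ^ G)"
      by (intro sum.cong refl) (auto simp: Subs_def card_PiE dest: finite_subset[OF _ finite_lessThan])
    also have "\<dots> = (L choose G) * P ^ G" using card_subs[of L G] by (simp add: Subs_def)
    finally show ?thesis .
  qed
  have cM: "card M = (K div Dl) * ((L choose G) * P ^ G)"
    unfolding M_def using cBlk by (simp add: card_cartesian_product)
  have rec: "F k p = (\<Sum>x\<in>M. Dx x k * Ex x p)" if k: "k < K" and p: "p \<in> exp_tuples L P" for k p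
  proof (cases "card (active_coords p) \<le> G")
    case False
    then have "F k p = 0" using F_sparse k p by auto
    moreover have "\<forall>x\<in>M. Ex x p = 0" using False unfolding Ex_def by auto
    ultimately show ?thesis by simp
  next
    case True
    define A where "A = active_coords p"
    have AL: "A \<subseteq> {..<L}" using active_sub[OF p] A_def by simp
    define S0 where "S0 = canon L G A"
    note c = canon[OF AL True[folded A_def] assms(3), folded S0_def]
    define q0 where "q0 = restrict (\<lambda>l. p ! l) S0"
    define x0 where "x0 = (k div Dl, (S0, q0))"
    have "q0 \<in> PiE S0 (\<lambda>_. {1..P})" unfolding q0_def using exp_nth[OF p] c(2) by auto
    then have x0M: "x0 \<in> M" unfolding x0_def M_def Blk_def Subs_def using c k assms(1,4)
      by (auto simp: less_mult_imp_div_less)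
    have lp: "length p = L" using p unfolding exp_tuples_def by simp
    have mp: "mono_tuple L S0 q0 = p"
    proof (rule nth_equalityI)
      show "length (mono_tuple L S0 q0) = length p" using lp unfolding mono_tuple_def by simp
      fix i assume "i < length (mono_tuple L S0 q0)"
      then have i: "i < L" unfolding mono_tuple_def by simp
      show "mono_tuple L S0 q0 ! i = p ! i"
      proof (cases "i \<in> S0")
        case True then show ?thesis using i unfolding mono_tuple_def q0_def by simp
      next
        case False then show ?thesis using i inactive[OF p _ i False] c(1) A_def unfolding mono_tuple_def by simp
      qed
    qed
    have "\<forall>x\<in>M. Dx x k * Ex x p = (if x = x0 then F k p else 0)"
    proof
      fix x assume xM: "x \<in> M"
      obtain g S q where x: "x = (g,(S,q))" by (cases x) auto
      show "Dx x k * Ex x p = (if x = x0 then F k p else 0)"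
      proof (cases "k div Dl = g \<and> p = mono_tuple L S q \<and> canon L G (active_coords p) = S")
        case True2: True
        have qS: "q \<in> PiE S (\<lambda>_. {1..P})" "S \<subseteq> {..<L}" using xM x unfolding M_def Blk_def Subs_def by auto
        have "S = S0" using conjunct2[OF conjunct2[OF True2]] unfolding S0_def A_def by simp
        moreover have "q = q0"
        proof (rule ext)
          fix l show "q l = q0 l"
          proof (cases "l \<in> S")
            case True
            then have "l < L" using qS by auto
            then have "p ! l = q l" using True2 True unfolding mono_tuple_def by simp
            then show ?thesis using True \<open>S = S0\<close> unfolding q0_def by simp
          next
            case False then show ?thesis using qS \<open>S = S0\<close> unfolding q0_def by (auto simp: PiE_def extensional_def)
          qed
        qed
        ultimately have "x = x0" using x x0_def True2 by simp
        moreover have "Dx x k * Ex x p = F k p"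
        proof -
          have h1: "k div Dl = g" "mono_tuple L S q = p" "canon L G (active_coords p) = S" using True2 by auto
          show ?thesis using True unfolding x Dx_def Ex_def by (simp add: h1)
        qed
        ultimately show ?thesis by simp
      next
        case False
        then have "Dx x k * Ex x p = 0" using x unfolding Dx_def Ex_def by auto
        moreover have "x \<noteq> x0"
        proof
          assume "x = x0"
          then have "g = k div Dl" "S = S0" "q = q0" using x x0_def by auto
          then show False using False S0_def A_def mp by simp
        qed
        ultimately show ?thesis by simp
      qed
    qed
    then show ?thesis using sum_single[OF finM x0M] by simp
  qed
  have gd: "good K L P G Dl Lm (Dx x) (Ex x)" if xM: "x \<in> M" for x
  proof -
    obtain g S q where x: "x = (g,(S,q))" by (cases x) auto
    have SL: "S \<subseteq> {..<L}" "card S = G" using xM x unfolding M_def Blk_def Subs_def by auto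
    have "{k. k < K \<and> Dx x k \<noteq> 0} \<subseteq> {g * Dl..<g * Dl + Dl}"
      using x div_block[OF _ assms(1)] unfolding Dx_def by (auto split: if_splits)
    then have "card {k. k < K \<and> Dx x k \<noteq> 0} \<le> card {g * Dl..<g * Dl + Dl}"
      by (intro card_mono) simp_all
    then have c1: "card {k. k < K \<and> Dx x k \<noteq> 0} \<le> Dl" by simp
    have c2: "\<forall>p\<in>exp_tuples L P. Ex x p \<noteq> 0 \<longrightarrow> (\<forall>l<L. l \<notin> S \<longrightarrow> p ! l = 1)"
    proof (intro ballI impI allI)
      fix p l assume p: "p \<in> exp_tuples L P" and ne: "Ex x p \<noteq> 0" and l: "l < L" "l \<notin> S"
      then have "card (active_coords p) \<le> G" "canon L G (active_coords p) = S"
        using x unfolding Ex_def by (auto split: if_splits)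
      then have "active_coords p \<subseteq> S" using canon(1)[OF active_sub[OF p]] assms(3) by auto
      then show "p ! l = 1" using inactive[OF p _ l] by simp
    qed
    have c3: "Max ((\<lambda>p. p ! l) ` support_row L P (\<lambda>_. Ex x) 0)
                 - Min ((\<lambda>p. p ! l) ` support_row L P (\<lambda>_. Ex x) 0) + 1 \<le> Lm"
      if l: "l \<in> S" and ne: "support_row L P (\<lambda>_. Ex x) 0 \<noteq> {}" for l
    proof -
      have "support_row L P (\<lambda>_. Ex x) 0 \<subseteq> {mono_tuple L S q}"
        unfolding support_row_def using x unfolding Ex_def by (auto split: if_splits)
      then have "support_row L P (\<lambda>_. Ex x) 0 = {mono_tuple L S q}" using ne by blast
      then show ?thesis using assms(2) by simp
    qed
    show ?thesis unfolding good_def using c1 c2 c3 SL by blast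
  qed
  show ?thesis using finM cM rec gd by blast
qed

theorem theorem1:
  fixes K L \<Gamma> \<Delta> P \<Lambda> :: nat
    and F :: "nat \<Rightarrow> nat list \<Rightarrow> real"
  assumes "0 < K" "0 < L" "0 < \<Gamma>" "0 < \<Delta>" "0 < P" "0 < \<Lambda>"
    and "\<Gamma> \<le> L" "\<Delta> \<le> K" "\<Lambda> \<le> P" "\<Delta> dvd K" "\<Lambda> dvd P"
    and F_sparse: "\<forall>k<K. \<forall>p\<in>exp_tuples L P. card (active_coords p) > \<Gamma> \<longrightarrow> F k p = 0"
  shows "\<exists>(N::nat) (D :: nat \<Rightarrow> nat \<Rightarrow> real) (E :: nat \<Rightarrow> nat list \<Rightarrow> real).
     real N \<le> real K / real \<Delta> * real (L choose \<Gamma>) * real (min \<Delta> (\<Lambda> ^ \<Gamma>))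
                 * (real P / real \<Lambda>) ^ \<Gamma>
   \<and> (\<forall>k<K. \<forall>p\<in>exp_tuples L P. F k p = mode1_product N E D k p)
   \<and> (\<forall>n<N.
        card {k. k < K \<and> D k n \<noteq> 0} \<le> \<Delta>
      \<and> (\<exists>S \<subseteq> {..<L}. card S \<le> \<Gamma>
           \<and> (\<forall>p\<in>exp_tuples L P. E n p \<noteq> 0 \<longrightarrow> (\<forall>l<L. l \<notin> S \<longrightarrow> p ! l = 1))
           \<and> (\<forall>l\<in>S. support_row L P E n \<noteq> {} \<longrightarrow>
                 Max ((\<lambda>p. p ! l) ` support_row L P E n)
                 - Min ((\<lambda>p. p ! l) ` support_row L P E n) + 1 \<le> \<Lambda>)))"
proof -
  define B where "B = real K / real \<Delta> * real (L choose \<Gamma>) * real (min \<Delta> (\<Lambda> ^ \<Gamma>))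
                 * (real P / real \<Lambda>) ^ \<Gamma>"
  have rK: "real (K div \<Delta>) = real K / real \<Delta>" using assms(10) by (simp add: real_of_nat_div)
  have rP: "real (P div \<Lambda>) = real P / real \<Lambda>" using assms(11) by (simp add: real_of_nat_div)
  have lam: "real \<Lambda> > 0" "real \<Delta> > 0" using assms by auto
  show ?thesis
  proof (cases "\<Delta> \<le> \<Lambda> ^ \<Gamma>")
    case True
    obtain M :: "(nat \<times> (nat set \<times> (nat \<Rightarrow> nat)) \<times> nat) set" and Dx Ex where
      M: "finite M" "card M = (K div \<Delta>) * ((L choose \<Gamma>) * (P div \<Lambda>) ^ \<Gamma>) * \<Delta>"
      "\<forall>k<K. \<forall>p\<in>exp_tuples L P. F k p = (\<Sum>x\<in>M. Dx x k * Ex x p)"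
      "\<forall>x\<in>M. good K L P \<Gamma> \<Delta> \<Lambda> (Dx x) (Ex x)"
      using user_case[of \<Delta> \<Lambda> \<Gamma> L K P F] assms by blast
    have "real (card M) = B" unfolding M(2) B_def using True rK rP lam
      by (simp add: min_def)
    then show ?thesis using reduce[OF M(1) _ M(3) M(4), of B] unfolding B_def by simp
  next
    case False
    obtain M :: "(nat \<times> (nat set \<times> (nat \<Rightarrow> nat))) set" and Dx Ex where
      M: "finite M" "card M = (K div \<Delta>) * ((L choose \<Gamma>) * P ^ \<Gamma>)"
      "\<forall>k<K. \<forall>p\<in>exp_tuples L P. F k p = (\<Sum>x\<in>M. Dx x k * Ex x p)"
      "\<forall>x\<in>M. good K L P \<Gamma> \<Delta> \<Lambda> (Dx x) (Ex x)"
      using mono_case[of \<Delta> \<Lambda> \<Gamma> L K P F] assms by blast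
    have "real (card M) = B" unfolding M(2) B_def using False rK lam
      by (simp add: min_def power_divide)
    then show ?thesis using reduce[OF M(1) _ M(3) M(4), of B] unfolding B_def by simp
  qed
qed

end
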